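(* Let $n\ge3$, let $S_n$ act on $V=\mathbb{C}^n$ by permutations, and fix $a,b\in\mathbb{C}$. Then $\phi(\kappa^L_{\mathrm{tri}},\kappa^L_{\mathrm{tri}})=2\psi(\kappa^C_{\mathrm{penta}})$.
   Context: $S_n$ acts by $\sigma e_i=e_{\sigma(i)}$; $V^g$ is the fixed space of $g$. $\kappa^L_{\mathrm{tri}}=\sum_g\kappa^L_gg$ is the linear 2-cochain supported on 3-cycles with $\kappa^L_{(ijk)}(e_i,e_j)=\kappa^L_{(ijk)}(e_j,e_k)=\kappa^L_{(ijk)}(e_k,e_i)=a(e_i+e_j+e_k)+b\sum_{l\notin\{i,j,k\}}e_l$ and $\kappa^L_{(ijk)}(e_l,e_m)=0$ whenever $e_l$ or $e_m$ lies in $V^{(ijk)}$. $\kappa^C_{\mathrm{penta}}=\sum_g\kappa^C_gg$ is the constant 2-cochain with $\kappa^C_g=0$ unless $g$ is a 5-cycle, and for a 5-cycle $g$, $\kappa^C_g(e_i,e_j)=(a-b)^2([g]_{ij}-[g]_{ji}-2[g^2]_{ij}+2[g^2]_{ji})$, where $[h]_{ij}=1$ if $i=h(j)$ and $0$ otherwise. For a 2-cochain $\alpha$, $\psi(\alpha)=\sum_g\psi_gg$ with $\psi_g(v_1,v_2,v_3)=\alpha_g(v_1,v_2)(gv_3-v_3)+\alpha_g(v_2,v_3)(gv_1-v_1)+\alpha_g(v_3,v_1)(gv_2-v_2)$; for $\alpha,\beta$ with $\beta$ linear, $\phi(\alpha,\beta)=\sum_g\phi_gg$, $\phi_g=\sum_{xy=g}\phi_{x,y}$,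 $\phi_{x,y}(v_1,v_2,v_3)=\alpha_x(v_1+yv_1,\beta_y(v_2,v_3))+\alpha_x(v_2+yv_2,\beta_y(v_3,v_1))+\alpha_x(v_3+yv_3,\beta_y(v_1,v_2))$. *)

theory Defs
  imports Complex_Main "HOL-Combinatorics.Cycles"
begin

text \<open>V = C^n is modelled as functions 'n \<Rightarrow> complex for a finite index type 'n
  with CARD('n) = n; S_n is the set of permutations g with g permutes UNIV,
  with product xy = x \<circ> y.  The basis vector e_i is the indicator of i.\<close>

type_synonym 'n vec = "'n \<Rightarrow> complex"

definition act :: "('n \<Rightarrow> 'n) \<Rightarrow> 'n vec \<Rightarrow> 'n vec" where
  "act g v = (\<lambda>j. v (inv g j))"   \<comment> \<open>so that g e_i = e_(g i)\<close>

definition is_3cycle :: "('n \<Rightarrow> 'n) \<Rightarrow> bool" where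
  "is_3cycle g \<longleftrightarrow> (\<exists>i j k. distinct [i, j, k] \<and> g = cycle_of_list [i, j, k])"

definition is_5cycle :: "('n \<Rightarrow> 'n) \<Rightarrow> bool" where
  "is_5cycle g \<longleftrightarrow> (\<exists>cs. length cs = 5 \<and> distinct cs \<and> g = cycle_of_list cs)"

text \<open>Values of kappa^L_g on pairs of basis vectors (e_p, e_q).  For g = (ijk) the
  pairs (e_p, e_(g p)) with p moved give a(e_i+e_j+e_k) + b sum_(l fixed) e_l,
  alternation gives the negatives on (e_(g p), e_p), and all pairs involving a
  fixed basis vector (or diagonal pairs) give 0.\<close>
definition kL_basis :: "complex \<Rightarrow> complex \<Rightarrow> ('n \<Rightarrow> 'n) \<Rightarrow> 'n \<Rightarrow> 'n \<Rightarrow> 'n vec" where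
  "kL_basis a b g p q =
     (if is_3cycle g \<and> g p \<noteq> p \<and> g q \<noteq> q then
        (if q = g p then (\<lambda>l. if g l \<noteq> l then a else b)
         else if p = g q then (\<lambda>l. - (if g l \<noteq> l then a else b))
         else (\<lambda>l. 0))
      else (\<lambda>l. 0))"

definition kL_tri :: "complex \<Rightarrow> complex \<Rightarrow> ('n::finite \<Rightarrow> 'n) \<Rightarrow> 'n vec \<Rightarrow> 'n vec \<Rightarrow> 'n vec" where
  "kL_tri a b g v w = (\<lambda>l. \<Sum>p\<in>UNIV. \<Sum>q\<in>UNIV. v p * w q * kL_basis a b g p q l)"

definition brk :: "('n \<Rightarrow> 'n) \<Rightarrow> 'n \<Rightarrow> 'n \<Rightarrow> complex" where
  "brk h i j = (if i = h j then 1 else 0)"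

definition kC_basis :: "complex \<Rightarrow> complex \<Rightarrow> ('n \<Rightarrow> 'n) \<Rightarrow> 'n \<Rightarrow> 'n \<Rightarrow> complex" where
  "kC_basis a b g i j =
     (if is_5cycle g then
        (a - b)^2 * (brk g i j - brk g j i - 2 * brk (g \<circ> g) i j + 2 * brk (g \<circ> g) j i)
      else 0)"

definition kC_penta :: "complex \<Rightarrow> complex \<Rightarrow> ('n::finite \<Rightarrow> 'n) \<Rightarrow> 'n vec \<Rightarrow> 'n vec \<Rightarrow> complex" where
  "kC_penta a b g v w = (\<Sum>i\<in>UNIV. \<Sum>j\<in>UNIV. v i * w j * kC_basis a b g i j)"

definition psi :: "(('n \<Rightarrow> 'n) \<Rightarrow> 'n vec \<Rightarrow> 'n vec \<Rightarrow> complex)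
     \<Rightarrow> ('n \<Rightarrow> 'n) \<Rightarrow> 'n vec \<Rightarrow> 'n vec \<Rightarrow> 'n vec \<Rightarrow> 'n vec" where
  "psi \<alpha> g v1 v2 v3 = (\<lambda>l.
      \<alpha> g v1 v2 * (act g v3 l - v3 l)
    + \<alpha> g v2 v3 * (act g v1 l - v1 l)
    + \<alpha> g v3 v1 * (act g v2 l - v2 l))"

definition phi_xy :: "(('n \<Rightarrow> 'n) \<Rightarrow> 'n vec \<Rightarrow> 'n vec \<Rightarrow> 'n vec)
     \<Rightarrow> (('n \<Rightarrow> 'n) \<Rightarrow> 'n vec \<Rightarrow> 'n vec \<Rightarrow> 'n vec)
     \<Rightarrow> ('n \<Rightarrow> 'n) \<Rightarrow> ('n \<Rightarrow> 'n) \<Rightarrow> 'n vec \<Rightarrow> 'n vec \<Rightarrow> 'n vec \<Rightarrow> 'n vec" where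
  "phi_xy \<alpha> \<beta> x y v1 v2 v3 = (\<lambda>l.
      \<alpha> x (\<lambda>m. v1 m + act y v1 m) (\<beta> y v2 v3) l
    + \<alpha> x (\<lambda>m. v2 m + act y v2 m) (\<beta> y v3 v1) l
    + \<alpha> x (\<lambda>m. v3 m + act y v3 m) (\<beta> y v1 v2) l)"

text \<open>phi_g = sum over x y = g in S_n, i.e. over y in S_n with x = g \<circ> y^(-1).\<close>
definition phi :: "(('n \<Rightarrow> 'n) \<Rightarrow> 'n vec \<Rightarrow> 'n vec \<Rightarrow> 'n vec)
     \<Rightarrow> (('n \<Rightarrow> 'n) \<Rightarrow> 'n vec \<Rightarrow> 'n vec \<Rightarrow> 'n vec)
     \<Rightarrow> ('n \<Rightarrow> 'n) \<Rightarrow> 'n vec \<Rightarrow> 'n vec \<Rightarrow> 'n vec \<Rightarrow> 'n vec" where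
  "phi \<alpha> \<beta> g v1 v2 v3 = (\<lambda>l.
      \<Sum>y\<in>{y. y permutes (UNIV :: 'n set)}. phi_xy \<alpha> \<beta> (g \<circ> inv y) y v1 v2 v3 l)"

end

theory Submission
  imports Defs
begin


definition c3 :: "'n \<Rightarrow> 'n \<Rightarrow> 'n \<Rightarrow> 'n \<Rightarrow> 'n" where
  "c3 i j k = (\<lambda>m. if m = i then j else if m = j then k else if m = k then i else m)"

definition c5 :: "'n \<Rightarrow> 'n \<Rightarrow> 'n \<Rightarrow> 'n \<Rightarrow> 'n \<Rightarrow> 'n \<Rightarrow> 'n" where
  "c5 i j k p q = (\<lambda>m. if m = i then j else if m = j then k else if m = k then p
     else if m = p then q else if m = q then i else m)"

definition om3 :: "'n \<Rightarrow> 'n \<Rightarrow> 'n \<Rightarrow> 'n vec \<Rightarrow> 'n vec \<Rightarrow> complex" where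
  "om3 i j k v w = v i * w j - v j * w i + v j * w k - v k * w j + v k * w i - v i * w k"

definition W3 :: "complex \<Rightarrow> complex \<Rightarrow> 'n \<Rightarrow> 'n \<Rightarrow> 'n \<Rightarrow> 'n vec" where
  "W3 a b i j k = (\<lambda>l. if l = i \<or> l = j \<or> l = k then a else b)"

lemma cycle3: "distinct [i,j,k] \<Longrightarrow> cycle_of_list [i,j,k] = c3 i j k"
  by (auto simp: fun_eq_iff c3_def transpose_def)

lemma cycle5: "distinct [i,j,k,p,q] \<Longrightarrow> cycle_of_list [i,j,k,p,q] = c5 i j k p q"
  by (auto simp: fun_eq_iff c5_def transpose_def)

lemma is3_iff: "is_3cycle g \<longleftrightarrow> (\<exists>i j k. distinct [i,j,k] \<and> g = c3 i j k)"
  unfolding is_3cycle_def using cycle3 by metis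

lemma len5: "length cs = 5 \<Longrightarrow> \<exists>i j k p q. cs = [i,j,k,p,q]"
  by (auto simp: numeral_eq_Suc length_Suc_conv)

lemma is5_iff: "is_5cycle g \<longleftrightarrow> (\<exists>i j k p q. distinct [i,j,k,p,q] \<and> g = c5 i j k p q)"
proof
  assume "is_5cycle g"
  then obtain cs where "length cs = 5" "distinct cs" "g = cycle_of_list cs" unfolding is_5cycle_def by blast
  then show "\<exists>i j k p q. distinct [i,j,k,p,q] \<and> g = c5 i j k p q"
    using len5 cycle5 by metis
next
  assume "\<exists>i j k p q. distinct [i,j,k,p,q] \<and> g = c5 i j k p q"
  then obtain i j k p q where "distinct [i,j,k,p,q]" "g = c5 i j k p q" by blast
  then show "is_5cycle g" unfolding is_5cycle_def
    by (intro exI[of _ "[i,j,k,p,q]"]) (simp only: cycle5, simp)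
qed

lemma distinct_sym: "distinct [i,j,k] \<Longrightarrow> j \<noteq> i \<and> k \<noteq> i \<and> k \<noteq> j" by auto

lemma c3_rot: "c3 i j k = c3 j k i" if "distinct [i,j,k]"
  using that by (auto simp: fun_eq_iff c3_def)

lemma inv_c3: "distinct [i,j,k] \<Longrightarrow> inv (c3 i j k) = c3 k j i"
  by (rule inv_unique_comp) (auto simp: fun_eq_iff c3_def)

lemma inv_c5: "distinct [i,j,k,p,q] \<Longrightarrow> inv (c5 i j k p q) = c5 q p k j i"
  by (rule inv_unique_comp) (auto simp: fun_eq_iff c5_def)

lemma c3_inv_cancel: "distinct [i,j,k] \<Longrightarrow> inv (c3 i j k) \<circ> c3 i j k = id"
  by (simp add: inv_c3) (auto simp: fun_eq_iff c3_def)

lemma kL_c3: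
  fixes i j k :: "'n::finite"
  assumes d: "distinct [i,j,k]"
  shows "kL_tri a b (c3 i j k) v w = (\<lambda>l. om3 i j k v w * W3 a b i j k l)"
proof
  fix l
  have is3: "is_3cycle (c3 i j k)" using d is3_iff by blast
  let ?f = "\<lambda>p q. v p * w q * kL_basis a b (c3 i j k) p q l"
  have z1: "?f p q = 0" if "p \<notin> {i,j,k} \<or> q \<notin> {i,j,k}" for p q
    using that d by (auto simp: kL_basis_def c3_def)
  have "(\<Sum>p\<in>UNIV. \<Sum>q\<in>UNIV. ?f p q) = (\<Sum>p\<in>{i,j,k}. \<Sum>q\<in>UNIV. ?f p q)"
    by (rule sum.mono_neutral_right) (auto simp: z1)
  also have "\<dots> = (\<Sum>p\<in>{i,j,k}. \<Sum>q\<in>{i,j,k}. ?f p q)"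
    by (rule sum.cong[OF refl], rule sum.mono_neutral_right) (auto simp: z1)
  also have "\<dots> = om3 i j k v w * W3 a b i j k l"
    using d is3 distinct_sym[OF d] by (simp add: kL_basis_def c3_def om3_def W3_def algebra_simps)
  finally show "kL_tri a b (c3 i j k) v w l = om3 i j k v w * W3 a b i j k l"
    by (simp add: kL_tri_def)
qed

lemma kL_non3: "\<not> is_3cycle g \<Longrightarrow> kL_tri a b g v w = (\<lambda>l. 0)"
  by (simp add: kL_tri_def kL_basis_def)

lemma kL_zero: "kL_tri a b g v (\<lambda>l. 0) = (\<lambda>l. 0)"
  by (simp add: kL_tri_def)

lemma om3_scale: "om3 p q r u (\<lambda>m. c * z m) = c * om3 p q r u z"
  by (simp add: om3_def algebra_simps)

lemma act_c3: "distinct [i,j,k] \<Longrightarrow> act (c3 i j k) v = (\<lambda>m. v (c3 k j i m))"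
  by (simp add: act_def inv_c3)

definition GG where
  "GG a b p q r i j k v1 v2 v3 l = W3 a b p q r l *
     (om3 i j k v2 v3 * om3 p q r (\<lambda>m. v1 m + v1 (c3 k j i m)) (W3 a b i j k)
    + om3 i j k v3 v1 * om3 p q r (\<lambda>m. v2 m + v2 (c3 k j i m)) (W3 a b i j k)
    + om3 i j k v1 v2 * om3 p q r (\<lambda>m. v3 m + v3 (c3 k j i m)) (W3 a b i j k))"

definition GS where
  "GS a b p q r i j k v1 v2 v3 =
     (om3 i j k v2 v3 * om3 p q r (\<lambda>m. v1 m + v1 (c3 k j i m)) (W3 a b i j k)
    + om3 i j k v3 v1 * om3 p q r (\<lambda>m. v2 m + v2 (c3 k j i m)) (W3 a b i j k)
    + om3 i j k v1 v2 * om3 p q r (\<lambda>m. v3 m + v3 (c3 k j i m)) (W3 a b i j k))"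

lemma GG_GS: "GG a b p q r i j k v1 v2 v3 l = W3 a b p q r l * GS a b p q r i j k v1 v2 v3"
  by (simp add: GG_def GS_def)

lemma Fform:
  fixes i j k :: "'n::finite"
  assumes "distinct [i,j,k]" "distinct [p,q,r]"
  shows "phi_xy (kL_tri a b) (kL_tri a b) (c3 p q r) (c3 i j k) v1 v2 v3 l = GG a b p q r i j k v1 v2 v3 l"
  using assms by (simp add: phi_xy_def kL_c3 act_c3 om3_scale GG_def algebra_simps)

lemma K0:
  fixes i j k :: "'n::finite"
  assumes d1: "distinct [i,j,k]" and d2: "distinct [i,q,r]"
    and nz: "phi_xy (kL_tri a b) (kL_tri a b) (c3 i q r) (c3 i j k) v1 v2 v3 l \<noteq> 0"
  shows "distinct [i,j,k,q,r] \<and> c3 i q r \<circ> c3 i j k = c5 i j k q r"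
proof -
  have nz': "GG a b i q r i j k v1 v2 v3 l \<noteq> 0" using nz Fform[OF d1 d2] by simp
  have d3: "j \<noteq> i" "k \<noteq> i" "k \<noteq> j" "q \<noteq> i" "r \<noteq> i" "r \<noteq> q" "i \<noteq> j" "i \<noteq> k" "j \<noteq> k" "i \<noteq> q" "i \<noteq> r" "q \<noteq> r"
    using d1 d2 by auto
  have ov: "q \<noteq> j \<and> q \<noteq> k \<and> r \<noteq> j \<and> r \<noteq> k"
  proof (rule ccontr)
    assume "\<not> ?thesis"
    then consider "q = j" "r = k" | "q = k" "r = j" | "q = j" "r \<noteq> k" "r \<noteq> j" | "q = k" "r \<noteq> j" "r \<noteq> k" | "r = j" "q \<noteq> k" "q \<noteq> j" | "r = k" "q \<noteq> j" "q \<noteq> k" using d3 by blast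
    then have "GS a b i q r i j k v1 v2 v3 = 0"
    proof cases
      case 1
      note [simp] = 1 d3
      show ?thesis by (simp add: GS_def om3_def W3_def c3_def) (algebra)?
    next
      case 2
      note [simp] = 2 d3
      show ?thesis by (simp add: GS_def om3_def W3_def c3_def) (algebra)?
    next
      case 3
      note [simp] = 3 d3
      show ?thesis by (simp add: GS_def om3_def W3_def c3_def) (algebra)?
    next
      case 4
      note [simp] = 4 d3
      show ?thesis by (simp add: GS_def om3_def W3_def c3_def) (algebra)?
    next
      case 5
      note [simp] = 5 d3
      show ?thesis by (simp add: GS_def om3_def W3_def c3_def) (algebra)?
    next
      case 6
      note [simp] = 6 d3
      show ?thesis by (simp add: GS_def om3_def W3_def c3_def) (algebra)?
    qed
    then show False using nz' by (simp add: GG_GS)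
  qed
  then have "distinct [i,j,k,q,r]" using d1 d2 by auto
  moreover have "c3 i q r \<circ> c3 i j k = c5 i j k q r"
    using d1 d2 ov by (auto simp: fun_eq_iff c3_def c5_def)
  ultimately show ?thesis by blast
qed

lemma om3_const: "z p = c \<Longrightarrow> z q = c \<Longrightarrow> z r = c \<Longrightarrow> om3 p q r u z = 0"
  by (simp add: om3_def algebra_simps)

lemma K1:
  fixes i j k :: "'n::finite"
  assumes d1: "distinct [i,j,k]" and d2: "distinct [p,q,r]"
    and nz: "phi_xy (kL_tri a b) (kL_tri a b) (c3 p q r) (c3 i j k) v1 v2 v3 l \<noteq> 0"
  shows "\<exists>t y1 y2 x1 x2. distinct [t,y1,y2,x1,x2] \<and> c3 i j k = c3 t y1 y2
           \<and> c3 p q r \<circ> c3 i j k = c5 t y1 y2 x1 x2"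
proof -
  have H: "?thesis" if e1: "distinct [i',j',k']" and e2: "distinct [i',q',r']"
     and y: "c3 i' j' k' = c3 i j k" and x: "c3 i' q' r' = c3 p q r" for i' j' k' q' r'
  proof -
    have "phi_xy (kL_tri a b) (kL_tri a b) (c3 i' q' r') (c3 i' j' k') v1 v2 v3 l \<noteq> 0"
      using nz y x by simp
    from K0[OF e1 e2 this] y x show ?thesis by metis
  qed
  have ry1: "c3 j k i = c3 i j k" "c3 k i j = c3 i j k" using d1 by (auto simp: fun_eq_iff c3_def)
  have rx1: "c3 q r p = c3 p q r" "c3 r p q = c3 p q r" using d2 by (auto simp: fun_eq_iff c3_def)
  show ?thesis
  proof (cases "{p,q,r} \<inter> {i,j,k} = {}")
    case True
    then have w: "W3 a b i j k p = b" "W3 a b i j k q = b" "W3 a b i j k r = b"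
      by (auto simp: W3_def)
    have "GS a b p q r i j k v1 v2 v3 = 0"
      unfolding GS_def by (simp add: om3_const[where z="W3 a b i j k" and c=b, OF w])
    then have "GG a b p q r i j k v1 v2 v3 l = 0" by (simp add: GG_GS)
    then show ?thesis using nz Fform[OF d1 d2] by simp
  next
    case False
    then have "p = i \<or> p = j \<or> p = k \<or> q = i \<or> q = j \<or> q = k \<or> r = i \<or> r = j \<or> r = k" by auto
    then show ?thesis
    proof (elim disjE)
      assume "p = i" then show ?thesis using d1 d2 ry1 rx1 by (intro H[of i j k q r]) auto
    next
      assume "p = j" then show ?thesis using d1 d2 ry1 rx1 by (intro H[of j k i q r]) auto
    next
      assume "p = k" then show ?thesis using d1 d2 ry1 rx1 by (intro H[of k i j q r]) auto
    next
      assume "q = i" then show ?thesis using d1 d2 ry1 rx1 by (intro H[of i j k r p]) auto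
    next
      assume "q = j" then show ?thesis using d1 d2 ry1 rx1 by (intro H[of j k i r p]) auto
    next
      assume "q = k" then show ?thesis using d1 d2 ry1 rx1 by (intro H[of k i j r p]) auto
    next
      assume "r = i" then show ?thesis using d1 d2 ry1 rx1 by (intro H[of i j k p q]) auto
    next
      assume "r = j" then show ?thesis using d1 d2 ry1 rx1 by (intro H[of j k i p q]) auto
    next
      assume "r = k" then show ?thesis using d1 d2 ry1 rx1 by (intro H[of k i j p q]) auto
    qed
  qed
qed

lemma K:
  fixes g y :: "'n::finite \<Rightarrow> 'n"
  assumes nz: "phi_xy (kL_tri a b) (kL_tri a b) (g \<circ> inv y) y v1 v2 v3 l \<noteq> 0"
  shows "\<exists>t y1 y2 x1 x2. distinct [t,y1,y2,x1,x2] \<and> y = c3 t y1 y2 \<and> g = c5 t y1 y2 x1 x2"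
proof -
  have y3: "is_3cycle y"
  proof (rule ccontr)
    assume "\<not> is_3cycle y"
    then have "kL_tri a b y v w = (\<lambda>l. 0)" for v w by (rule kL_non3)
    then show False using nz by (simp only: phi_xy_def kL_zero) simp
  qed
  have x3: "is_3cycle (g \<circ> inv y)"
  proof (rule ccontr)
    assume "\<not> is_3cycle (g \<circ> inv y)"
    then have "kL_tri a b (g \<circ> inv y) v w = (\<lambda>l. 0)" for v w by (rule kL_non3)
    then show False using nz by (simp only: phi_xy_def) simp
  qed
  obtain i j k where d1: "distinct [i,j,k]" and yd: "y = c3 i j k" using y3 unfolding is3_iff by blast
  obtain p q r where d2: "distinct [p,q,r]" and xd: "g \<circ> inv y = c3 p q r" using x3 unfolding is3_iff by blast
  have g: "g = c3 p q r \<circ> c3 i j k"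
  proof -
    have "g = g \<circ> (inv y \<circ> y)" using c3_inv_cancel[OF d1] yd by simp
    also have "\<dots> = c3 p q r \<circ> c3 i j k" using xd yd by (simp add: o_assoc)
    finally show ?thesis .
  qed
  have "phi_xy (kL_tri a b) (kL_tri a b) (c3 p q r) (c3 i j k) v1 v2 v3 l \<noteq> 0"
    using nz xd yd by simp
  from K1[OF d1 d2 this] obtain t y1 y2 x1 x2 where "distinct [t,y1,y2,x1,x2]"
    "c3 i j k = c3 t y1 y2" "c3 p q r \<circ> c3 i j k = c5 t y1 y2 x1 x2" by blast
  then show ?thesis using g yd by blast
qed

lemma neq_pt: "f z \<noteq> h z \<Longrightarrow> f \<noteq> h" by auto

lemma c3_permutes: "distinct [i,j,k] \<Longrightarrow> c3 i j k permutes UNIV"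
  by (metis cycle3 cycle_permutes permutes_subset subset_UNIV)

lemma kC_c5:
  fixes e0 :: "'n::finite"
  assumes d: "distinct [e0,e1,e2,e3,e4]"
  shows "kC_penta a b (c5 e0 e1 e2 e3 e4) v w = (a - b)^2 * ((v e1 * w e0 - v e0 * w e1 - 2 * v e2 * w e0 + 2 * v e0 * w e2) + (v e2 * w e1 - v e1 * w e2 - 2 * v e3 * w e1 + 2 * v e1 * w e3) + (v e3 * w e2 - v e2 * w e3 - 2 * v e4 * w e2 + 2 * v e2 * w e4) + (v e4 * w e3 - v e3 * w e4 - 2 * v e0 * w e3 + 2 * v e3 * w e0) + (v e0 * w e4 - v e4 * w e0 - 2 * v e1 * w e4 + 2 * v e4 * w e1))"
proof -
  have dd: "e0 \<noteq> e1" "e0 \<noteq> e2" "e0 \<noteq> e3" "e0 \<noteq> e4" "e1 \<noteq> e0" "e1 \<noteq> e2" "e1 \<noteq> e3" "e1 \<noteq> e4" "e2 \<noteq> e0" "e2 \<noteq> e1" "e2 \<noteq> e3" "e2 \<noteq> e4" "e3 \<noteq> e0" "e3 \<noteq> e1" "e3 \<noteq> e2" "e3 \<noteq> e4" "e4 \<noteq> e0" "e4 \<noteq> e1" "e4 \<noteq> e2" "e4 \<noteq> e3" using d by auto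
  have is5: "is_5cycle (c5 e0 e1 e2 e3 e4)" using d is5_iff by blast
  let ?f = "\<lambda>i j. v i * w j * kC_basis a b (c5 e0 e1 e2 e3 e4) i j"
  let ?M = "{e0,e1,e2,e3,e4}"
  have z1: "?f i j = 0" if "i \<notin> ?M \<or> j \<notin> ?M" for i j
    using that dd is5 by (auto simp: kC_basis_def brk_def c5_def)
  have "kC_penta a b (c5 e0 e1 e2 e3 e4) v w = (\<Sum>i\<in>?M. \<Sum>j\<in>UNIV. ?f i j)"
    unfolding kC_penta_def by (rule sum.mono_neutral_right) (auto simp: z1)
  also have "\<dots> = (\<Sum>i\<in>?M. \<Sum>j\<in>?M. ?f i j)"
    by (rule sum.cong[OF refl], rule sum.mono_neutral_right) (auto simp: z1)
  also have "\<dots> = (a - b)^2 * ((v e1 * w e0 - v e0 * w e1 - 2 * v e2 * w e0 + 2 * v e0 * w e2) + (v e2 * w e1 - v e1 * w e2 - 2 * v e3 * w e1 + 2 * v e1 * w e3) + (v e3 * w e2 - v e2 * w e3 - 2 * v e4 * w e2 + 2 * v e2 * w e4) + (v e4 * w e3 - v e3 * w e4 - 2 * v e0 * w e3 + 2 * v e3 * w e0) + (v e0 * w e4 - v e4 * w e0 - 2 * v e1 * w e4 + 2 * v e4 * w e1))"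
    using dd is5 by (simp add: kC_basis_def brk_def c5_def algebra_simps)
  finally show ?thesis .
qed


lemma caseA:
  fixes e0 :: "'n::finite"
  assumes d: "distinct [e0,e1,e2,e3,e4]" and g: "g = c5 e0 e1 e2 e3 e4"
  shows "phi (kL_tri a b) (kL_tri a b) g v1 v2 v3 l = 2 * psi (kC_penta a b) g v1 v2 v3 l"
proof -
  have dd: "e0 \<noteq> e1" "e0 \<noteq> e2" "e0 \<noteq> e3" "e0 \<noteq> e4" "e1 \<noteq> e0" "e1 \<noteq> e2" "e1 \<noteq> e3" "e1 \<noteq> e4" "e2 \<noteq> e0" "e2 \<noteq> e1" "e2 \<noteq> e3" "e2 \<noteq> e4" "e3 \<noteq> e0" "e3 \<noteq> e1" "e3 \<noteq> e2" "e3 \<noteq> e4" "e4 \<noteq> e0" "e4 \<noteq> e1" "e4 \<noteq> e2" "e4 \<noteq> e3" using d by auto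
  let ?F = "\<lambda>y. phi_xy (kL_tri a b) (kL_tri a b) (g \<circ> inv y) y v1 v2 v3 l"
  define Y where "Y = {c3 e0 e1 e2, c3 e1 e2 e3, c3 e2 e3 e4, c3 e3 e4 e0, c3 e4 e0 e1}"
  have Ysub: "Y \<subseteq> {y. y permutes UNIV}" unfolding Y_def using d by (auto intro!: c3_permutes)
  have z: "?F y = 0" if "y \<notin> Y" for y
  proof (rule ccontr)
    assume "?F y \<noteq> 0"
    from K[OF this] obtain t y1 y2 x1 x2 where dt: "distinct [t,y1,y2,x1,x2]"
      and yt: "y = c3 t y1 y2" and gt: "g = c5 t y1 y2 x1 x2" by blast
    have "g t = y1" "g y1 = y2" using gt dt by (auto simp: c5_def)
    then have yy: "y = c3 t (g t) (g (g t))" using yt by simp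
    have "g t \<noteq> t" using gt dt by (auto simp: c5_def)
    then have "t \<in> {e0,e1,e2,e3,e4}" using g by (auto simp: c5_def split: if_splits)
    then have "y \<in> Y" using yy g dd unfolding Y_def by (auto simp: c5_def)
    then show False using that by simp
  qed
  have phiY: "phi (kL_tri a b) (kL_tri a b) g v1 v2 v3 l = (\<Sum>y\<in>Y. ?F y)"
    unfolding phi_def by (rule sum.mono_neutral_right) (use Ysub z in auto)
  have n0: "c3 e0 e1 e2 \<noteq> c3 e1 e2 e3" by (rule neq_pt[where z=e0]) (use dd in \<open>simp add: c3_def\<close>)
  have n1: "c3 e0 e1 e2 \<noteq> c3 e2 e3 e4" by (rule neq_pt[where z=e0]) (use dd in \<open>simp add: c3_def\<close>)
  have n2: "c3 e0 e1 e2 \<noteq> c3 e3 e4 e0" by (rule neq_pt[where z=e0]) (use dd in \<open>simp add: c3_def\<close>)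
  have n3: "c3 e0 e1 e2 \<noteq> c3 e4 e0 e1" by (rule neq_pt[where z=e1]) (use dd in \<open>simp add: c3_def\<close>)
  have n4: "c3 e1 e2 e3 \<noteq> c3 e2 e3 e4" by (rule neq_pt[where z=e1]) (use dd in \<open>simp add: c3_def\<close>)
  have n5: "c3 e1 e2 e3 \<noteq> c3 e3 e4 e0" by (rule neq_pt[where z=e0]) (use dd in \<open>simp add: c3_def\<close>)
  have n6: "c3 e1 e2 e3 \<noteq> c3 e4 e0 e1" by (rule neq_pt[where z=e0]) (use dd in \<open>simp add: c3_def\<close>)
  have n7: "c3 e2 e3 e4 \<noteq> c3 e3 e4 e0" by (rule neq_pt[where z=e0]) (use dd in \<open>simp add: c3_def\<close>)
  have n8: "c3 e2 e3 e4 \<noteq> c3 e4 e0 e1" by (rule neq_pt[where z=e0]) (use dd in \<open>simp add: c3_def\<close>)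
  have n9: "c3 e3 e4 e0 \<noteq> c3 e4 e0 e1" by (rule neq_pt[where z=e0]) (use dd in \<open>simp add: c3_def\<close>)
  have F0: "phi_xy (kL_tri a b) (kL_tri a b) (g \<circ> inv (c3 e0 e1 e2)) (c3 e0 e1 e2) v1 v2 v3 l = GG a b e0 e3 e4 e0 e1 e2 v1 v2 v3 l"
  proof -
    have "g = c3 e0 e3 e4 \<circ> c3 e0 e1 e2" using dd g by (auto simp: fun_eq_iff c3_def c5_def)
    then have "g \<circ> inv (c3 e0 e1 e2) = c3 e0 e3 e4" using dd by (simp add: o_assoc inv_c3, auto simp: fun_eq_iff c3_def)
    then show ?thesis using dd by (simp add: Fform)
  qed
  have F1: "phi_xy (kL_tri a b) (kL_tri a b) (g \<circ> inv (c3 e1 e2 e3)) (c3 e1 e2 e3) v1 v2 v3 l = GG a b e1 e4 e0 e1 e2 e3 v1 v2 v3 l"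
  proof -
    have "g = c3 e1 e4 e0 \<circ> c3 e1 e2 e3" using dd g by (auto simp: fun_eq_iff c3_def c5_def)
    then have "g \<circ> inv (c3 e1 e2 e3) = c3 e1 e4 e0" using dd by (simp add: o_assoc inv_c3, auto simp: fun_eq_iff c3_def)
    then show ?thesis using dd by (simp add: Fform)
  qed
  have F2: "phi_xy (kL_tri a b) (kL_tri a b) (g \<circ> inv (c3 e2 e3 e4)) (c3 e2 e3 e4) v1 v2 v3 l = GG a b e2 e0 e1 e2 e3 e4 v1 v2 v3 l"
  proof -
    have "g = c3 e2 e0 e1 \<circ> c3 e2 e3 e4" using dd g by (auto simp: fun_eq_iff c3_def c5_def)
    then have "g \<circ> inv (c3 e2 e3 e4) = c3 e2 e0 e1" using dd by (simp add: o_assoc inv_c3, auto simp: fun_eq_iff c3_def)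
    then show ?thesis using dd by (simp add: Fform)
  qed
  have F3: "phi_xy (kL_tri a b) (kL_tri a b) (g \<circ> inv (c3 e3 e4 e0)) (c3 e3 e4 e0) v1 v2 v3 l = GG a b e3 e1 e2 e3 e4 e0 v1 v2 v3 l"
  proof -
    have "g = c3 e3 e1 e2 \<circ> c3 e3 e4 e0" using dd g by (auto simp: fun_eq_iff c3_def c5_def)
    then have "g \<circ> inv (c3 e3 e4 e0) = c3 e3 e1 e2" using dd by (simp add: o_assoc inv_c3, auto simp: fun_eq_iff c3_def)
    then show ?thesis using dd by (simp add: Fform)
  qed
  have F4: "phi_xy (kL_tri a b) (kL_tri a b) (g \<circ> inv (c3 e4 e0 e1)) (c3 e4 e0 e1) v1 v2 v3 l = GG a b e4 e2 e3 e4 e0 e1 v1 v2 v3 l"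
  proof -
    have "g = c3 e4 e2 e3 \<circ> c3 e4 e0 e1" using dd g by (auto simp: fun_eq_iff c3_def c5_def)
    then have "g \<circ> inv (c3 e4 e0 e1) = c3 e4 e2 e3" using dd by (simp add: o_assoc inv_c3, auto simp: fun_eq_iff c3_def)
    then show ?thesis using dd by (simp add: Fform)
  qed
  have "(\<Sum>y\<in>Y. ?F y) = ?F (c3 e0 e1 e2) + ?F (c3 e1 e2 e3) + ?F (c3 e2 e3 e4) + ?F (c3 e3 e4 e0) + ?F (c3 e4 e0 e1)"
    unfolding Y_def using n0 n1 n2 n3 n4 n5 n6 n7 n8 n9 by simp
  also have "\<dots> = GG a b e0 e3 e4 e0 e1 e2 v1 v2 v3 l + GG a b e1 e4 e0 e1 e2 e3 v1 v2 v3 l + GG a b e2 e0 e1 e2 e3 e4 v1 v2 v3 l + GG a b e3 e1 e2 e3 e4 e0 v1 v2 v3 l + GG a b e4 e2 e3 e4 e0 e1 v1 v2 v3 l"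
    using F0 F1 F2 F3 F4 by simp
  also have "\<dots> = 2 * psi (kC_penta a b) g v1 v2 v3 l"
  proof -
    have act: "act (c5 e0 e1 e2 e3 e4) v = (\<lambda>m. v (c5 e4 e3 e2 e1 e0 m))" for v using d by (simp add: act_def inv_c5)
    have ps: "psi (kC_penta a b) g v1 v2 v3 l =
       kC_penta a b (c5 e0 e1 e2 e3 e4) v1 v2 * (v3 (c5 e4 e3 e2 e1 e0 l) - v3 l)
     + kC_penta a b (c5 e0 e1 e2 e3 e4) v2 v3 * (v1 (c5 e4 e3 e2 e1 e0 l) - v1 l)
     + kC_penta a b (c5 e0 e1 e2 e3 e4) v3 v1 * (v2 (c5 e4 e3 e2 e1 e0 l) - v2 l)"
      by (simp add: psi_def g act)
    have "l = e0 \<or> l = e1 \<or> l = e2 \<or> l = e3 \<or> l = e4 \<or> (l \<noteq> e0 \<and> l \<noteq> e1 \<and> l \<noteq> e2 \<and> l \<noteq> e3 \<and> l \<noteq> e4)" by blast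
    moreover have ?thesis if [simp]: "l \<noteq> e0" "l \<noteq> e1" "l \<noteq> e2" "l \<noteq> e3" "l \<noteq> e4"
      apply (simp only: ps kC_c5[OF d])
      apply (simp add: dd GG_def om3_def W3_def c3_def c5_def)
      apply algebra
      done
    moreover have ?thesis if [simp]: "l = e0"
      apply (simp only: ps kC_c5[OF d])
      apply (simp add: dd GG_def om3_def W3_def c3_def c5_def)
      apply algebra
      done
    moreover have ?thesis if [simp]: "l = e1"
      apply (simp only: ps kC_c5[OF d])
      apply (simp add: dd GG_def om3_def W3_def c3_def c5_def)
      apply algebra
      done
    moreover have ?thesis if [simp]: "l = e2"
      apply (simp only: ps kC_c5[OF d])
      apply (simp add: dd GG_def om3_def W3_def c3_def c5_def)
      apply algebra
      done
    moreover have ?thesis if [simp]: "l = e3"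
      apply (simp only: ps kC_c5[OF d])
      apply (simp add: dd GG_def om3_def W3_def c3_def c5_def)
      apply algebra
      done
    moreover have ?thesis if [simp]: "l = e4"
      apply (simp only: ps kC_c5[OF d])
      apply (simp add: dd GG_def om3_def W3_def c3_def c5_def)
      apply algebra
      done
    ultimately show ?thesis by blast
  qed
  finally show ?thesis using phiY by simp
qed

theorem proposition7p5:
  fixes a b :: complex
    and g :: "'n::finite \<Rightarrow> 'n"
    and v1 v2 v3 :: "'n \<Rightarrow> complex"
  assumes "card (UNIV :: 'n set) \<ge> 3"
    and "g permutes (UNIV :: 'n set)"
  shows "phi (kL_tri a b) (kL_tri a b) g v1 v2 v3 = (\<lambda>l. 2 * psi (kC_penta a b) g v1 v2 v3 l)"
proof (rule ext)
  fix l
  show "phi (kL_tri a b) (kL_tri a b) g v1 v2 v3 l = 2 * psi (kC_penta a b) g v1 v2 v3 l"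
  proof (cases "\<exists>e0 e1 e2 e3 e4. distinct [e0,e1,e2,e3,e4] \<and> g = c5 e0 e1 e2 e3 e4")
    case True
    then obtain e0 e1 e2 e3 e4 where "distinct [e0,e1,e2,e3,e4]" "g = c5 e0 e1 e2 e3 e4" by blast
    then show ?thesis by (rule caseA)
  next
    case False
    have z: "phi_xy (kL_tri a b) (kL_tri a b) (g \<circ> inv y) y v1 v2 v3 l = 0" for y
    proof (rule ccontr)
      assume "phi_xy (kL_tri a b) (kL_tri a b) (g \<circ> inv y) y v1 v2 v3 l \<noteq> 0"
      from K[OF this] False show False by blast
    qed
    have n5: "\<not> is_5cycle g" using False is5_iff by blast
    have kc: "kC_penta a b g v w = 0" for v w using n5 by (simp add: kC_penta_def kC_basis_def)
    show ?thesis by (simp add: phi_def z psi_def kc)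
  qed
qed

end
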